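(* Let $d>0$, $\gamma_1>0$, $\gamma_2,\ldots,\gamma_k\ge0$, $a_i=\sqrt{\gamma_i}$, $\mathbf{a}_l=[a_1,\ldots,a_l,0,\ldots,0]^T\in\mathbb{R}^k$, and let $\mathbf{x}=[x_1,\ldots,x_k]^T$ have i.i.d. real standard Gaussian entries. For $1\le l\le k$ define $P_{l:k}(d)=\Pr\{\mathbf{a}_h^T\mathbf{x}>\tfrac12 d\|\mathbf{a}_h\|^2\ \text{for all } h=l,\ldots,k\}$. Then for every $l<k$, $P_{l:k}(d)\ge\tfrac12 P_{l+1:k}(d)$.
   Context: $\gamma_l$ is the SNR of HARQ round $l$; $P_{l:k}(d)$ is the probability that a pairwise error between codewords at Euclidean distance $d$ occurs after each of the rounds $l,\ldots,k$ under maximum-ratio combining. *)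

theory Defs
  imports "HOL-Probability.Probability"
begin

definition gauss_vec :: "nat \<Rightarrow> (nat \<Rightarrow> real) measure" where
  "gauss_vec k = PiM {1..k} (\<lambda>_. density lborel std_normal_density)"

definition aTx :: "(nat \<Rightarrow> real) \<Rightarrow> nat \<Rightarrow> (nat \<Rightarrow> real) \<Rightarrow> real" where
  "aTx g h x = (\<Sum>i=1..h. sqrt (g i) * x i)"

definition anorm2 :: "(nat \<Rightarrow> real) \<Rightarrow> nat \<Rightarrow> real" where
  "anorm2 g h = (\<Sum>i=1..h. (sqrt (g i))^2)"

definition P_lk :: "(nat \<Rightarrow> real) \<Rightarrow> nat \<Rightarrow> nat \<Rightarrow> real \<Rightarrow> real" where
  "P_lk g k l d = measure (gauss_vec k)
     {x \<in> space (gauss_vec k). \<forall>h\<in>{l..k}. aTx g h x > d / 2 * anorm2 g h}"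

end

theory Submission
  imports Defs
begin

lemma sym_K:
  fixes \<sigma> a z t :: real
  assumes "\<sigma> > 0"
  defines "m \<equiv> a * z / (\<sigma>\<^sup>2 + a\<^sup>2)"
  shows "std_normal_density (2*m - t) * normal_density 0 \<sigma> (z - a*(2*m - t))
       = std_normal_density t * normal_density 0 \<sigma> (z - a*t)"
proof -
  have pos: "\<sigma>\<^sup>2 + a\<^sup>2 > 0" using assms by (simp add: add_pos_nonneg)
  have mD: "a * z = m * (\<sigma>\<^sup>2 + a\<^sup>2)" using pos unfolding m_def by simp
  have d: "\<sigma>\<^sup>2*(2*m-t)\<^sup>2 + (z-a*(2*m-t))\<^sup>2 - (\<sigma>\<^sup>2*t\<^sup>2 + (z-a*t)\<^sup>2) = 4*(t-m)*(a*z - m*(\<sigma>\<^sup>2+a\<^sup>2))"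
    by (simp add: algebra_simps power2_eq_square)
  hence d0: "\<sigma>\<^sup>2*(2*m-t)\<^sup>2 + (z-a*(2*m-t))\<^sup>2 = \<sigma>\<^sup>2*t\<^sup>2 + (z-a*t)\<^sup>2" using mD by simp
  have e: "- (2*m - t)\<^sup>2 / 2 + -(z - a*(2*m - t))\<^sup>2 / (2*\<sigma>\<^sup>2)
         = - t\<^sup>2 / 2 + -(z - a*t)\<^sup>2 / (2*\<sigma>\<^sup>2)"
  proof -
    have "- (2*m - t)\<^sup>2 / 2 + -(z - a*(2*m - t))\<^sup>2 / (2*\<sigma>\<^sup>2) = - (\<sigma>\<^sup>2*(2*m-t)\<^sup>2 + (z-a*(2*m-t))\<^sup>2) / (2*\<sigma>\<^sup>2)"
      using assms(1) by (simp add: field_simps)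
    also have "\<dots> = - (\<sigma>\<^sup>2*t\<^sup>2 + (z-a*t)\<^sup>2) / (2*\<sigma>\<^sup>2)" using d0 by simp
    also have "\<dots> = - t\<^sup>2 / 2 + -(z - a*t)\<^sup>2 / (2*\<sigma>\<^sup>2)"
      using assms(1) by (simp add: field_simps)
    finally show ?thesis .
  qed
  show ?thesis
    unfolding std_normal_density_def normal_density_def
    using e by (simp add: mult_exp_exp algebra_simps)
qed

lemma pt_ineq:
  fixes \<sigma> a z \<theta>0 t0 :: real
  assumes s: "\<sigma> > 0" and a: "a > 0" and z: "z > \<theta>0" and t0: "t0 = \<sigma>\<^sup>2/(\<sigma>\<^sup>2+a\<^sup>2)*\<theta>0"
  shows "(\<integral>\<^sup>+t. ennreal (std_normal_density t * normal_density 0 \<sigma> (z - a*t)) * indicator {..t0} (z - a*t) \<partial>lborel)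
       \<le> (\<integral>\<^sup>+t. ennreal (std_normal_density t * normal_density 0 \<sigma> (z - a*t)) * indicator {t0<..} (z - a*t) \<partial>lborel)"
proof -
  define m where "m = a * z / (\<sigma>\<^sup>2 + a\<^sup>2)"
  have pos: "\<sigma>\<^sup>2 + a\<^sup>2 > 0" using s by (simp add: add_pos_nonneg)
  let ?K = "\<lambda>t. std_normal_density t * normal_density 0 \<sigma> (z - a*t)"
  have "(\<integral>\<^sup>+t. ennreal (?K t) * indicator {..t0} (z - a*t) \<partial>lborel)
      = (\<integral>\<^sup>+t. ennreal (?K (2*m - t)) * indicator {..t0} (z - a*(2*m - t)) \<partial>lborel)"
    using nn_integral_real_affine[of "\<lambda>t. ennreal (?K t) * indicator {..t0} (z - a*t)" "-1" "2*m"] by simp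
  also have "\<dots> = (\<integral>\<^sup>+t. ennreal (?K t) * indicator {..t0} (z - a*(2*m - t)) \<partial>lborel)"
    using sym_K[OF s, of a z] unfolding m_def by simp
  also have "\<dots> \<le> (\<integral>\<^sup>+t. ennreal (?K t) * indicator {t0<..} (z - a*t) \<partial>lborel)"
  proof (rule nn_integral_mono)
    fix t
    have "z - a*(2*m - t) \<le> t0 \<Longrightarrow> t0 < z - a*t"
    proof -
      assume h: "z - a*(2*m - t) \<le> t0"
      have am: "a*m*(\<sigma>\<^sup>2+a\<^sup>2) = a*a*z" using pos unfolding m_def by simp
      have "(z - a*m) * (\<sigma>\<^sup>2+a\<^sup>2) = \<sigma>\<^sup>2 * z"
        using am by (simp add: algebra_simps power2_eq_square)
      hence cz: "z - a*m = \<sigma>\<^sup>2/(\<sigma>\<^sup>2+a\<^sup>2) * z" using pos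
        by (metis nonzero_eq_divide_eq order_less_irrefl times_divide_eq_left)
      have "\<sigma>\<^sup>2/(\<sigma>\<^sup>2+a\<^sup>2) * \<theta>0 < \<sigma>\<^sup>2/(\<sigma>\<^sup>2+a\<^sup>2) * z"
        using z s pos by (intro mult_strict_left_mono) auto
      then show ?thesis using h cz t0 by (simp add: algebra_simps)
    qed
    then show "ennreal (?K t) * indicator {..t0} (z - a*(2*m - t)) \<le> ennreal (?K t) * indicator {t0<..} (z - a*t)"
      by (auto simp: indicator_def)
  qed
  finally show ?thesis .
qed

lemma transf:
  fixes \<sigma> a :: real and S C :: "real set"
  assumes s: "\<sigma> > 0" and [measurable]: "S \<in> sets borel" "C \<in> sets borel"
  shows "(\<integral>\<^sup>+t. ennreal (std_normal_density t) * (\<integral>\<^sup>+u. ennreal (normal_density 0 \<sigma> u) * indicator S (u + a*t) * indicator C u \<partial>lborel) \<partial>lborel)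
       = (\<integral>\<^sup>+z. indicator S z * (\<integral>\<^sup>+t. ennreal (std_normal_density t * normal_density 0 \<sigma> (z - a*t)) * indicator C (z - a*t) \<partial>lborel) \<partial>lborel)"
proof -
  have "(\<integral>\<^sup>+t. ennreal (std_normal_density t) * (\<integral>\<^sup>+u. ennreal (normal_density 0 \<sigma> u) * indicator S (u + a*t) * indicator C u \<partial>lborel) \<partial>lborel)
     = (\<integral>\<^sup>+t. (\<integral>\<^sup>+u. ennreal (std_normal_density t) * (ennreal (normal_density 0 \<sigma> u) * indicator S (u + a*t) * indicator C u) \<partial>lborel) \<partial>lborel)"
    by (subst nn_integral_cmult) auto
  also have "\<dots> = (\<integral>\<^sup>+t. (\<integral>\<^sup>+z. ennreal (std_normal_density t) * (ennreal (normal_density 0 \<sigma> (-(a*t) + 1*z)) * indicator S (-(a*t) + 1*z + a*t) * indicator C (-(a*t) + 1*z)) \<partial>lborel) \<partial>lborel)"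
  proof (rule nn_integral_cong)
    fix t :: real assume "t \<in> space lborel"
    show "(\<integral>\<^sup>+u. ennreal (std_normal_density t) * (ennreal (normal_density 0 \<sigma> u) * indicator S (u + a*t) * indicator C u) \<partial>lborel) = (\<integral>\<^sup>+z. ennreal (std_normal_density t) * (ennreal (normal_density 0 \<sigma> (-(a*t) + 1*z)) * indicator S (-(a*t) + 1*z + a*t) * indicator C (-(a*t) + 1*z)) \<partial>lborel)"
      using nn_integral_real_affine[of "\<lambda>u. ennreal (std_normal_density t) * (ennreal (normal_density 0 \<sigma> u) * indicator S (u + a*t) * indicator C u)" 1 "-(a*t)"] by simp
  qed
  also have "\<dots> = (\<integral>\<^sup>+t. (\<integral>\<^sup>+z. indicator S z * (ennreal (std_normal_density t * normal_density 0 \<sigma> (z - a*t)) * indicator C (z - a*t)) \<partial>lborel) \<partial>lborel)"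
    by (intro nn_integral_cong) (simp add: ennreal_mult' mult_ac)
  also have "\<dots> = (\<integral>\<^sup>+z. (\<integral>\<^sup>+t. indicator S z * (ennreal (std_normal_density t * normal_density 0 \<sigma> (z - a*t)) * indicator C (z - a*t)) \<partial>lborel) \<partial>lborel)"
    by (rule lborel_pair.Fubini') measurable
  also have "\<dots> = (\<integral>\<^sup>+z. indicator S z * (\<integral>\<^sup>+t. ennreal (std_normal_density t * normal_density 0 \<sigma> (z - a*t)) * indicator C (z - a*t) \<partial>lborel) \<partial>lborel)"
    by (rule nn_integral_cong, rule nn_integral_cmult) measurable
  finally show ?thesis .
qed

abbreviation Nd :: "real measure" where "Nd \<equiv> density lborel std_normal_density"

lemma prob_Nd: "prob_space Nd" by (rule prob_space_normal_density) simp

lemma sets_Nd[simp, measurable_cong]: "sets Nd = sets borel" by simp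

lemma prob_PiNd: "prob_space (PiM (I::nat set) (\<lambda>_. Nd))"
  by (rule prob_space_PiM) (rule prob_Nd)

lemma coord_indep:
  fixes I :: "nat set"
  assumes "finite I" "I \<noteq> {}"
  shows "prob_space.indep_vars (PiM I (\<lambda>_. Nd)) (\<lambda>_. borel) (\<lambda>i x. x i) I"
proof -
  interpret P: prob_space "PiM I (\<lambda>_. Nd)" by (rule prob_PiNd)
  define X where "X = (\<lambda>i (x::nat \<Rightarrow> real). if i \<in> I then x i else 0)"
  have rv: "\<And>i. X i \<in> measurable (PiM I (\<lambda>_. Nd)) borel"
    unfolding X_def by (case_tac "i \<in> I") auto
  have "P.indep_vars (\<lambda>_. borel) X I"
  proof (subst P.indep_vars_iff_distr_eq_PiM[OF assms(2) rv])
    have "distr (PiM I (\<lambda>_. Nd)) (PiM I (\<lambda>_. borel)) (\<lambda>x. \<lambda>i\<in>I. X i x) = distr (PiM I (\<lambda>_. Nd)) (PiM I (\<lambda>_. Nd)) (\<lambda>x. x)"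
      by (rule distr_cong) (auto simp: X_def space_PiM PiE_def extensional_def restrict_def intro!: sets_PiM_cong ext)
    also have "\<dots> = PiM I (\<lambda>_. Nd)" by simp
    also have "\<dots> = PiM I (\<lambda>i. distr (PiM I (\<lambda>_. Nd)) borel (X i))"
    proof (rule PiM_cong)
      fix i assume i: "i \<in> I"
      have "distr (PiM I (\<lambda>_. Nd)) borel (X i) = distr (PiM I (\<lambda>_. Nd)) Nd (\<lambda>\<omega>. \<omega> i)"
        by (rule distr_cong) (auto simp: X_def i)
      also have "\<dots> = Nd" by (rule distr_PiM_component[OF prob_Nd i])
      finally show "Nd = distr (PiM I (\<lambda>_. Nd)) borel (X i)" by simp
    qed simp
    finally show "distr (PiM I (\<lambda>_. Nd)) (PiM I (\<lambda>_. borel)) (\<lambda>x. \<lambda>i\<in>I. X i x) = PiM I (\<lambda>i. distr (PiM I (\<lambda>_. Nd)) borel (X i))" .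
  qed
  then show ?thesis
    by (rule P.indep_vars_cong[THEN iffD1, rotated -1]) (auto simp: X_def fun_eq_iff)
qed


lemma coord_dist:
  fixes I :: "nat set"
  assumes "i \<in> I"
  shows "distributed (PiM I (\<lambda>_. Nd)) lborel (\<lambda>x. x i) (\<lambda>x. ennreal (std_normal_density x))"
  unfolding distributed_def
proof (intro conjI)
  have "distr (PiM I (\<lambda>_. Nd)) lborel (\<lambda>x. x i) = distr (PiM I (\<lambda>_. Nd)) Nd (\<lambda>x. x i)"
    by (rule distr_cong) auto
  also have "\<dots> = Nd" by (rule distr_PiM_component[OF prob_Nd assms])
  finally show "distr (PiM I (\<lambda>_. Nd)) lborel (\<lambda>x. x i) = density lborel (\<lambda>x. ennreal (std_normal_density x))" .
qed (use assms in auto)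

lemma U_dist:
  fixes g :: "nat \<Rightarrow> real" and l :: nat
  assumes "l \<ge> 1" "g 1 > 0" "\<forall>i\<in>{2..l}. g i \<ge> 0"
  shows "distributed (PiM {1..l} (\<lambda>_. Nd)) lborel (aTx g l) (\<lambda>x. ennreal (normal_density 0 (sqrt (anorm2 g l)) x))"
proof -
  interpret P: prob_space "PiM {1..l} (\<lambda>_. Nd)" by (rule prob_PiNd)
  define K where "K = {i\<in>{1..l}. g i > 0}"
  have K1: "1 \<in> K" using assms unfolding K_def by auto
  have Kfin: "finite K" "K \<noteq> {}" "K \<subseteq> {1..l}" using K1 unfolding K_def by auto
  have ind0: "P.indep_vars (\<lambda>_. borel) (\<lambda>i x. x i) K"
    by (rule P.indep_vars_subset[OF coord_indep Kfin(3)]) (use assms in auto)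
  have ind: "P.indep_vars (\<lambda>_. borel) (\<lambda>i x. sqrt (g i) * x i) K"
    by (rule P.indep_vars_compose2[OF ind0]) auto
  have nd: "distributed (PiM {1..l} (\<lambda>_. Nd)) lborel (\<lambda>x. sqrt (g i) * x i) (normal_density 0 (sqrt (g i)))"
    if i: "i \<in> K" for i
  proof -
    have gi: "g i > 0" "i \<in> {1..l}" using i unfolding K_def by auto
    have "distributed (PiM {1..l} (\<lambda>_. Nd)) lborel (\<lambda>x. 0 + sqrt (g i) * x i) (normal_density (0 + sqrt (g i) * 0) (\<bar>sqrt (g i)\<bar> * 1))"
      by (rule P.normal_density_affine[OF coord_dist[OF gi(2)]]) (use gi in auto)
    then show ?thesis using gi by simp
  qed
  have D: "distributed (PiM {1..l} (\<lambda>_. Nd)) lborel (\<lambda>x. \<Sum>i\<in>K. sqrt (g i) * x i) (normal_density (\<Sum>i\<in>K. 0) (sqrt (\<Sum>i\<in>K. (sqrt (g i))\<^sup>2)))"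
    by (rule P.sum_indep_normal[OF Kfin(1,2) ind]) (use nd K_def in auto)
  have z: "\<forall>i\<in>{1..l}-K. g i = 0"
  proof
    fix i assume i: "i \<in> {1..l}-K"
    then have "i \<noteq> 1" using K1 by auto
    then have "g i \<ge> 0" using i assms(3) by auto
    then show "g i = 0" using i unfolding K_def by auto
  qed
  moreover have "(\<lambda>x. \<Sum>i\<in>K. sqrt (g i) * x i) = aTx g l"
    unfolding aTx_def using Kfin z
    by (intro ext sum.mono_neutral_left) auto
  moreover have "(\<Sum>i\<in>K. (sqrt (g i))\<^sup>2) = anorm2 g l"
    unfolding anorm2_def using Kfin z
    by (intro sum.mono_neutral_left) auto
  ultimately show ?thesis using D by simp
qed


lemma core:
  fixes \<sigma> a \<theta>0 t0 :: real and S :: "real set"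
  assumes s: "\<sigma> > 0" and a: "a > 0" and S: "S \<in> sets borel" and Sgt: "\<forall>z\<in>S. z > \<theta>0"
    and t0: "t0 = \<sigma>\<^sup>2/(\<sigma>\<^sup>2+a\<^sup>2)*\<theta>0"
  shows "(\<integral>\<^sup>+t. ennreal (std_normal_density t) * (\<integral>\<^sup>+u. ennreal (normal_density 0 \<sigma> u) * indicator S (u + a*t) * indicator {..t0} u \<partial>lborel) \<partial>lborel)
       \<le> (\<integral>\<^sup>+t. ennreal (std_normal_density t) * (\<integral>\<^sup>+u. ennreal (normal_density 0 \<sigma> u) * indicator S (u + a*t) * indicator {t0<..} u \<partial>lborel) \<partial>lborel)"
  unfolding transf[OF s S atMost_borel] transf[OF s S greaterThan_borel]
proof (rule nn_integral_mono)
  fix z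
  show "indicator S z * (\<integral>\<^sup>+t. ennreal (std_normal_density t * normal_density 0 \<sigma> (z - a*t)) * indicator {..t0} (z - a*t) \<partial>lborel)
     \<le> indicator S z * (\<integral>\<^sup>+t. ennreal (std_normal_density t * normal_density 0 \<sigma> (z - a*t)) * indicator {t0<..} (z - a*t) \<partial>lborel)"
  proof (cases "z \<in> S")
    case True
    then show ?thesis using pt_ineq[OF s a _ t0, of z] Sgt by simp
  qed simp
qed

lemma aTx_meas:
  assumes "h \<le> k"
  shows "aTx g h \<in> borel_measurable (PiM {1..k} (\<lambda>_. Nd))"
  unfolding aTx_def
proof (rule borel_measurable_sum)
  fix i assume "i \<in> {1..h}"
  then have "i \<in> {1..k}" using assms by auto
  then show "(\<lambda>x. sqrt (g i) * x i) \<in> borel_measurable (PiM {1..k} (\<lambda>_. Nd))" by measurable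
qed

lemma eval:
  fixes g :: "nat \<Rightarrow> real" and k l :: nat and Sw :: "(nat \<Rightarrow> real) \<Rightarrow> real set" and C :: "real set"
  assumes l: "1 \<le> l" "l < k" and g: "g 1 > 0" "\<forall>i\<in>{2..k}. g i \<ge> 0"
  and Sw_loc: "\<And>x x'. (\<forall>i\<in>{l+2..k}. x i = x' i) \<Longrightarrow> Sw x = Sw x'"
  and Sw_meas: "\<And>x. Sw x \<in> sets borel"
  and C: "C \<in> sets borel"
  and E: "E \<in> sets (PiM {1..k} (\<lambda>_. Nd))"
  and Eind: "\<And>x. x \<in> space (PiM {1..k} (\<lambda>_. Nd)) \<Longrightarrow> indicator E x = indicator (Sw x) (aTx g l x + sqrt (g (l+1)) * x (l+1)) * (indicator C (aTx g l x) :: ennreal)"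
  shows "emeasure (PiM {1..k} (\<lambda>_. Nd)) E = (\<integral>\<^sup>+w. (\<integral>\<^sup>+t. ennreal (std_normal_density t) * (\<integral>\<^sup>+u. ennreal (normal_density 0 (sqrt (anorm2 g l)) u) * indicator (Sw w) (u + sqrt (g (l+1))*t) * indicator C u \<partial>lborel) \<partial>lborel) \<partial>PiM {l+2..k} (\<lambda>_. Nd))"
proof -
  interpret PS: product_sigma_finite "\<lambda>_::nat. Nd"
    by (simp add: product_sigma_finite_def prob_space_imp_sigma_finite prob_Nd)
  define i0 where "i0 = l+1"
  define J where "J = {l+2..k}"
  define I where "I = {1..l}"
  interpret PI: sigma_finite_measure "PiM I (\<lambda>_. Nd)"
    by (rule prob_space_imp_sigma_finite[OF prob_PiNd])
  have kset: "{1..k} = insert i0 J \<union> I" unfolding i0_def J_def I_def using l by auto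
  have disj: "insert i0 J \<inter> I = {}" "i0 \<notin> J" unfolding i0_def J_def I_def by auto
  have fin: "finite J" "finite I" "finite (insert i0 J)" unfolding J_def I_def by auto
  have Ek[measurable]: "E \<in> sets (PiM (insert i0 J \<union> I) (\<lambda>_. Nd))" using E kset by simp
  have "emeasure (PiM {1..k} (\<lambda>_. Nd)) E = (\<integral>\<^sup>+x. indicator E x \<partial>PiM (insert i0 J \<union> I) (\<lambda>_. Nd))"
    using nn_integral_indicator[OF Ek] kset by simp
  also have "\<dots> = (\<integral>\<^sup>+x. (\<integral>\<^sup>+y. indicator E (merge (insert i0 J) I (x, y)) \<partial>PiM I (\<lambda>_. Nd)) \<partial>PiM (insert i0 J) (\<lambda>_. Nd))"
    by (rule PS.product_nn_integral_fold[OF disj(1) fin(3,2)]) measurable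
  also have "\<dots> = (\<integral>\<^sup>+w. (\<integral>\<^sup>+t. (\<integral>\<^sup>+y. indicator E (merge (insert i0 J) I (w(i0:=t), y)) \<partial>PiM I (\<lambda>_. Nd)) \<partial>Nd) \<partial>PiM J (\<lambda>_. Nd))"
    by (rule PS.product_nn_integral_insert[OF fin(1) disj(2)]) measurable
  also have "\<dots> = (\<integral>\<^sup>+w. (\<integral>\<^sup>+t. ennreal (std_normal_density t) * (\<integral>\<^sup>+u. ennreal (normal_density 0 (sqrt (anorm2 g l)) u) * indicator (Sw w) (u + sqrt (g (l+1))*t) * indicator C u \<partial>lborel) \<partial>lborel) \<partial>PiM J (\<lambda>_. Nd))"
  proof (rule nn_integral_cong)
    fix w assume w: "w \<in> space (PiM J (\<lambda>_. Nd))"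
    have [measurable]: "Sw w \<in> sets borel" "C \<in> sets borel" using Sw_meas C by auto
    have inner: "(\<integral>\<^sup>+y. indicator E (merge (insert i0 J) I (w(i0:=t), y)) \<partial>PiM I (\<lambda>_. Nd))
        = (\<integral>\<^sup>+u. ennreal (normal_density 0 (sqrt (anorm2 g l)) u) * indicator (Sw w) (u + sqrt (g (l+1))*t) * indicator C u \<partial>lborel)" for t
    proof -
      have "(\<integral>\<^sup>+y. indicator E (merge (insert i0 J) I (w(i0:=t), y)) \<partial>PiM I (\<lambda>_. Nd))
          = (\<integral>\<^sup>+y. indicator (Sw w) (aTx g l y + sqrt (g (l+1)) * t) * indicator C (aTx g l y) \<partial>PiM I (\<lambda>_. Nd))"
      proof (rule nn_integral_cong)
        fix y assume y: "y \<in> space (PiM I (\<lambda>_. Nd))"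
        define p where "p = merge (insert i0 J) I (w(i0:=t), y)"
        have wt: "w(i0:=t) \<in> space (PiM (insert i0 J) (\<lambda>_. Nd))"
          by (rule measurable_space[OF measurable_component_update[OF w disj(2)]]) simp
        have "p \<in> space (PiM (insert i0 J \<union> I) (\<lambda>_. Nd))"
          unfolding p_def by (rule measurable_space[OF measurable_merge]) (use wt y in \<open>simp add: space_pair_measure\<close>)
        then have pk: "p \<in> space (PiM {1..k} (\<lambda>_. Nd))" using kset by simp
        have p1: "aTx g l p = aTx g l y"
          unfolding aTx_def p_def merge_def using l
          by (intro sum.cong) (auto simp: i0_def J_def I_def)
        have p2: "p (l+1) = t" unfolding p_def merge_def i0_def by simp
        have p3: "Sw p = Sw w"
          by (rule Sw_loc) (auto simp: p_def merge_def i0_def J_def)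
        show "indicator E (merge (insert i0 J) I (w(i0:=t), y)) = (indicator (Sw w) (aTx g l y + sqrt (g (l+1)) * t) * indicator C (aTx g l y) :: ennreal)"
          using Eind[OF pk] p1 p2 p3 unfolding p_def by simp
      qed
      also have "\<dots> = (\<integral>\<^sup>+u. ennreal (normal_density 0 (sqrt (anorm2 g l)) u) * (indicator (Sw w) (u + sqrt (g (l+1))*t) * indicator C u) \<partial>lborel)"
        unfolding I_def
        by (rule distributed_nn_integral[OF U_dist, symmetric]) (use l g in auto)
      finally show ?thesis by (simp add: mult.assoc)
    qed
    show "(\<integral>\<^sup>+t. (\<integral>\<^sup>+y. indicator E (merge (insert i0 J) I (w(i0:=t), y)) \<partial>PiM I (\<lambda>_. Nd)) \<partial>Nd)
        = (\<integral>\<^sup>+t. ennreal (std_normal_density t) * (\<integral>\<^sup>+u. ennreal (normal_density 0 (sqrt (anorm2 g l)) u) * indicator (Sw w) (u + sqrt (g (l+1))*t) * indicator C u \<partial>lborel) \<partial>lborel)"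
      unfolding inner by (rule nn_integral_density) measurable
  qed
  finally show ?thesis unfolding J_def .
qed


lemma setE_meas:
  "{x\<in>space (PiM {1..k} (\<lambda>_. Nd)). \<forall>h\<in>{L..k}. aTx g h x > d / 2 * anorm2 g h} \<in> sets (PiM {1..k} (\<lambda>_. Nd))"
proof (rule sets.sets_Collect_finite_All)
  fix h assume "h \<in> {L..k}"
  then have [measurable]: "aTx g h \<in> borel_measurable (PiM {1..k} (\<lambda>_. Nd))" by (intro aTx_meas) auto
  show "{x\<in>space (PiM {1..k} (\<lambda>_. Nd)). aTx g h x > d / 2 * anorm2 g h} \<in> sets (PiM {1..k} (\<lambda>_. Nd))"
    by measurable
qed simp

lemma aTx_split:
  assumes "l + 1 \<le> h"
  shows "aTx g h x = aTx g l x + sqrt (g (l+1)) * x (l+1) + (\<Sum>i\<in>{l+2..h}. sqrt (g i) * x i)"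
proof -
  have "{1..h} = insert (l+1) {1..l} \<union> {l+2..h}" using assms by auto
  then have "aTx g h x = (\<Sum>i\<in>insert (l+1) {1..l}. sqrt (g i) * x i) + (\<Sum>i\<in>{l+2..h}. sqrt (g i) * x i)"
    unfolding aTx_def by (simp add: sum.union_disjoint)
  also have "(\<Sum>i\<in>insert (l+1) {1..l}. sqrt (g i) * x i) = aTx g l x + sqrt (g (l+1)) * x (l+1)"
    unfolding aTx_def by simp
  finally show ?thesis .
qed

lemma anorm2_Suc: "anorm2 g (l+1) = anorm2 g l + (sqrt (g (l+1)))\<^sup>2"
  unfolding anorm2_def by simp

theorem lemma3:
  fixes g :: "nat \<Rightarrow> real" and d :: real and k l :: nat
  assumes "d > 0" and "g 1 > 0" and "\<forall>i\<in>{2..k}. g i \<ge> 0"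
    and "1 \<le> l" and "l < k"
  shows "P_lk g k l d \<ge> 1/2 * P_lk g k (l+1) d"
proof -
  define M where "M = PiM {1..k} (\<lambda>_. Nd)"
  interpret P: prob_space M unfolding M_def by (rule prob_PiNd)
  define El where "El = {x\<in>space M. \<forall>h\<in>{l..k}. aTx g h x > d / 2 * anorm2 g h}"
  define El1 where "El1 = {x\<in>space M. \<forall>h\<in>{l+1..k}. aTx g h x > d / 2 * anorm2 g h}"
  have PE: "P_lk g k l d = measure M El" "P_lk g k (l+1) d = measure M El1"
    unfolding P_lk_def gauss_vec_def M_def El_def El1_def by simp_all
  have mEl: "El \<in> sets M" and mEl1: "El1 \<in> sets M"
    unfolding El_def El1_def M_def by (rule setE_meas)+
  have sub: "El \<subseteq> El1" unfolding El_def El1_def by auto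
  have gl1: "g (l+1) \<ge> 0" using assms by auto
  have lset: "{l..k} = insert l {l+1..k}" using assms by auto
  show ?thesis
  proof (cases "g (l+1) = 0")
    case True
    have "El = El1"
    proof -
      have eqs: "\<And>x. aTx g (l+1) x = aTx g l x" "anorm2 g (l+1) = anorm2 g l"
        using True unfolding aTx_def anorm2_def by simp_all
      have key: "aTx g l x > d / 2 * anorm2 g l" if H: "\<forall>h\<in>{l+1..k}. aTx g h x > d / 2 * anorm2 g h" for x
      proof -
        have "l+1 \<in> {l+1..k}" using assms(5) by simp
        from H[rule_format, OF this] show ?thesis using eqs by simp
      qed
      have "\<And>x. (\<forall>h\<in>{l..k}. aTx g h x > d / 2 * anorm2 g h) \<longleftrightarrow> (\<forall>h\<in>{l+1..k}. aTx g h x > d / 2 * anorm2 g h)"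
        unfolding lset using key by auto
      then show ?thesis unfolding El_def El1_def by simp
    qed
    then show ?thesis using PE by simp
  next
    case False
    then have gpos: "g (l+1) > 0" using gl1 by simp
    define a where "a = sqrt (g (l+1))"
    define R where "R = (\<lambda>h (x::nat\<Rightarrow>real). \<Sum>i\<in>{l+2..h}. sqrt (g i) * x i)"
    define Sw where "Sw = (\<lambda>x. {z. \<forall>h\<in>{l+1..k}. z + R h x > d / 2 * anorm2 g h})"
    define t0 where "t0 = d / 2 * anorm2 g l"
    have split: "\<And>h x. h \<in> {l+1..k} \<Longrightarrow> aTx g h x = aTx g l x + a * x (l+1) + R h x"
      unfolding a_def R_def by (rule aTx_split) simp
    have inEl1: "x \<in> El1 \<longleftrightarrow> x \<in> space M \<and> aTx g l x + a * x (l+1) \<in> Sw x" for x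
    proof -
      have "(\<forall>h\<in>{l+1..k}. aTx g h x > d / 2 * anorm2 g h) \<longleftrightarrow> (\<forall>h\<in>{l+1..k}. aTx g l x + a * x (l+1) + R h x > d / 2 * anorm2 g h)"
        using split by (intro ball_cong) auto
      then show ?thesis unfolding El1_def Sw_def by simp
    qed
    have inEl: "x \<in> El \<longleftrightarrow> x \<in> El1 \<and> aTx g l x \<in> {t0<..}" for x
      unfolding El_def El1_def t0_def lset by auto
    have Sw_loc: "\<And>x x'. (\<forall>i\<in>{l+2..k}. x i = x' i) \<Longrightarrow> Sw x = Sw x'"
    proof -
      fix x x' :: "nat \<Rightarrow> real" assume h: "\<forall>i\<in>{l+2..k}. x i = x' i"
      have "\<And>h. h \<in> {l+1..k} \<Longrightarrow> R h x = R h x'" unfolding R_def using h by (intro sum.cong) auto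
      then show "Sw x = Sw x'" unfolding Sw_def by auto
    qed
    have Sw_meas: "Sw x \<in> sets borel" for x
    proof -
      have "Sw x = {z\<in>space borel. \<forall>h\<in>{l+1..k}. d / 2 * anorm2 g h < z + R h x}" by (auto simp: Sw_def)
      also have "\<dots> \<in> sets borel"
        by (rule sets.sets_Collect_finite_All) auto
      finally show ?thesis .
    qed
    have a0: "a > 0" using gpos unfolding a_def by simp
    define \<sigma> where "\<sigma> = sqrt (anorm2 g l)"
    have An: "anorm2 g l > 0"
    proof -
      have "(sqrt (g 1))\<^sup>2 \<le> anorm2 g l"
        unfolding anorm2_def by (rule member_le_sum) (use assms(4) in auto)
      moreover have "(sqrt (g 1))\<^sup>2 > 0" using assms(2) by simp
      ultimately show ?thesis by linarith
    qed
    have s0: "\<sigma> > 0" unfolding \<sigma>_def using An by simp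
    have s2: "\<sigma>\<^sup>2 = anorm2 g l" unfolding \<sigma>_def using An by simp
    define \<theta>0 where "\<theta>0 = d / 2 * anorm2 g (l+1)"
    have t0eq: "t0 = \<sigma>\<^sup>2/(\<sigma>\<^sup>2+a\<^sup>2)*\<theta>0"
    proof -
      have "anorm2 g (l+1) = \<sigma>\<^sup>2 + a\<^sup>2" using anorm2_Suc[of g l] s2 unfolding a_def by simp
      moreover have "\<sigma>\<^sup>2 + a\<^sup>2 > 0" using s0 by (simp add: add_pos_nonneg)
      ultimately show ?thesis unfolding t0_def \<theta>0_def using s2 by (simp add: field_simps)
    qed
    have Sgt: "\<forall>z\<in>Sw w. z > \<theta>0" for w
    proof
      fix z assume "z \<in> Sw w"
      moreover have "l+1 \<in> {l+1..k}" using assms(5) by simp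
      ultimately have "z + R (l+1) w > d / 2 * anorm2 g (l+1)" unfolding Sw_def by blast
      moreover have "R (l+1) w = 0" unfolding R_def by simp
      ultimately show "z > \<theta>0" unfolding \<theta>0_def by simp
    qed
    have mD: "El1 - El \<in> sets M" using mEl mEl1 by auto
    have e1: "emeasure M El = (\<integral>\<^sup>+w. (\<integral>\<^sup>+t. ennreal (std_normal_density t) * (\<integral>\<^sup>+u. ennreal (normal_density 0 (sqrt (anorm2 g l)) u) * indicator (Sw w) (u + sqrt (g (l+1))*t) * indicator {t0<..} u \<partial>lborel) \<partial>lborel) \<partial>PiM {l+2..k} (\<lambda>_. Nd))"
      unfolding M_def
    proof (rule eval[OF assms(4,5,2,3) Sw_loc Sw_meas greaterThan_borel])
      show "El \<in> sets (PiM {1..k} (\<lambda>_. Nd))" using mEl M_def by simp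
      fix x assume "x \<in> space (PiM {1..k} (\<lambda>_. Nd))"
      then show "indicator El x = (indicator (Sw x) (aTx g l x + sqrt (g (l+1)) * x (l+1)) * indicator {t0<..} (aTx g l x) :: ennreal)"
        using inEl[of x] inEl1[of x] unfolding M_def a_def by (auto simp: indicator_def)
    qed
    have e2: "emeasure M (El1 - El) = (\<integral>\<^sup>+w. (\<integral>\<^sup>+t. ennreal (std_normal_density t) * (\<integral>\<^sup>+u. ennreal (normal_density 0 (sqrt (anorm2 g l)) u) * indicator (Sw w) (u + sqrt (g (l+1))*t) * indicator {..t0} u \<partial>lborel) \<partial>lborel) \<partial>PiM {l+2..k} (\<lambda>_. Nd))"
      unfolding M_def
    proof (rule eval[OF assms(4,5,2,3) Sw_loc Sw_meas atMost_borel])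
      show "El1 - El \<in> sets (PiM {1..k} (\<lambda>_. Nd))" using mD M_def by simp
      fix x assume "x \<in> space (PiM {1..k} (\<lambda>_. Nd))"
      then show "indicator (El1 - El) x = (indicator (Sw x) (aTx g l x + sqrt (g (l+1)) * x (l+1)) * indicator {..t0} (aTx g l x) :: ennreal)"
        using inEl[of x] inEl1[of x] unfolding M_def a_def by (auto simp: indicator_def)
    qed
    have "emeasure M (El1 - El) \<le> emeasure M El"
      unfolding e1 e2
    proof (rule nn_integral_mono)
      fix w
      show "(\<integral>\<^sup>+t. ennreal (std_normal_density t) * (\<integral>\<^sup>+u. ennreal (normal_density 0 (sqrt (anorm2 g l)) u) * indicator (Sw w) (u + sqrt (g (l+1))*t) * indicator {..t0} u \<partial>lborel) \<partial>lborel)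
         \<le> (\<integral>\<^sup>+t. ennreal (std_normal_density t) * (\<integral>\<^sup>+u. ennreal (normal_density 0 (sqrt (anorm2 g l)) u) * indicator (Sw w) (u + sqrt (g (l+1))*t) * indicator {t0<..} u \<partial>lborel) \<partial>lborel)"
        using core[OF s0 a0 Sw_meas Sgt t0eq] unfolding \<sigma>_def a_def .
    qed
    then have le: "measure M (El1 - El) \<le> measure M El"
      by (simp add: P.emeasure_eq_measure)
    have "measure M (El1 - El) = measure M El1 - measure M El"
      by (rule measure_Diff[OF _ mEl1 mEl sub]) simp
    then show ?thesis using le PE by simp

  qed
qed

end
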